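(* In the situation of Lemma 2 (frontier ${}^ts\,y x^h y\,s$, points $I$, $J=I+(0,-1)$, rays $i_n=t(I+n(1,0))$, $j_n=t(J+n(1,-1))$), let $k'_n=t(J+n(1,-1)+(1,0))$ be the value immediately to the right of $j_n$. Then $k'_n-1=(h+1)\,i_n\,i_{n+1}$ for all $n\in\mathbf N$. Consequently, with $k_n=t(J+n(1,-1)+(0,-1))$, the triple $(j_{n+1}+j_n,\;j_{n+1}-j_n,\;k_n+k'_n)$ is a Pythagorean triple: $(j_{n+1}-j_n)^2+(k_n+k'_n)^2=(j_{n+1}+j_n)^2$.
   Context: Cartesian coordinates on $\mathbf Z^2$. The transpose ${}^tw$ of a word reverses it and exchanges $x$ and $y$. Setting: $h\in\mathbf N$, $s$ a right-infinite word over $\{x,y\}$ with the frontier ${}^ts\,yx^hy\,s$ admissible (neither half ultimately constant), embedded as lattice points $P_i$ with $P_i-P_{i-1}=(1,0)$ for a letter $x$ and $(0,1)$ for a letter $y$; $t:\mathbf Z^2\to\mathbf N$ is the unique tiling with $t(a,b+1)t(a+1,b)-t(a,b)t(a+1,b+1)=1$ for all $(a,b)$ and $t(P_i)=1$; $I$ is the path point between $x^h$ and the following $y$ of the middle factor $yx^hy$. *)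

theory Defs
  imports Main
begin

datatype letter = X | Y

text \<open>Exchange of x and y (letterwise part of the transpose).\<close>
fun swap_letter :: "letter \<Rightarrow> letter" where
  "swap_letter X = Y"
| "swap_letter Y = X"

definition ult_const :: "(nat \<Rightarrow> letter) \<Rightarrow> bool" where
  "ult_const s \<longleftrightarrow> (\<exists>N c. \<forall>k\<ge>N. s k = c)"

text \<open>The bi-infinite frontier  (transpose s) y x^h y s, indexed by the integers:
  position 0 is the first y of the middle factor, positions 1..h are the x's,
  position h+1 is the second y; positions > h+1 carry s, positions < 0 carry
  the transpose of s (position -1-k carries the swap of s k).\<close>
definition frontier :: "nat \<Rightarrow> (nat \<Rightarrow> letter) \<Rightarrow> int \<Rightarrow> letter" where
  "frontier h s i =
     (if i < 0 then swap_letter (s (nat (- i - 1)))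
      else if i = 0 \<or> i = int h + 1 then Y
      else if i \<le> int h then X
      else s (nat (i - int h - 2)))"

fun step :: "letter \<Rightarrow> int \<times> int" where
  "step X = (1, 0)"
| "step Y = (0, 1)"

definition is_path :: "(int \<Rightarrow> letter) \<Rightarrow> (int \<Rightarrow> int \<times> int) \<Rightarrow> bool" where
  "is_path w P \<longleftrightarrow> (\<forall>i. P i = (fst (P (i - 1)) + fst (step (w i)),
                                   snd (P (i - 1)) + snd (step (w i))))"

definition sl2_tiling :: "(int \<times> int \<Rightarrow> int) \<Rightarrow> bool" where
  "sl2_tiling t \<longleftrightarrow>
     (\<forall>a b. t (a, b + 1) * t (a + 1, b) - t (a, b) * t (a + 1, b + 1) = 1)"

end

theory Submission imports Defs Complex_Main "HOL-Library.Product_Plus" begin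

definition dt :: "real \<times> real \<Rightarrow> real \<times> real \<Rightarrow> real" where
 "dt p q = fst p * snd q - snd p * fst q"

definition uu :: "(int \<times> int \<Rightarrow> int) \<Rightarrow> int \<Rightarrow> int \<Rightarrow> real \<times> real" where
 "uu t y0 a = (of_int (t (a, y0)), of_int (t (a, y0 - 1)))"

definition vv :: "(int \<times> int \<Rightarrow> int) \<Rightarrow> int \<Rightarrow> int \<Rightarrow> int \<Rightarrow> real \<times> real" where
 "vv t x0 y0 b = (of_int (t (x0, b)) * fst (uu t y0 (x0+1)) - of_int (t (x0+1, b)) * fst (uu t y0 x0),
                   of_int (t (x0, b)) * snd (uu t y0 (x0+1)) - of_int (t (x0+1, b)) * snd (uu t y0 x0))"

lemma tile: "sl2_tiling t \<Longrightarrow> t (a, b + 1) * t (a + 1, b) - t (a, b) * t (a + 1, b + 1) = 1"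
  by (simp add: sl2_tiling_def)

lemma tiling_pos: assumes "sl2_tiling t" "\<forall>p. 0 \<le> t p" shows "0 < t p"
proof -
  obtain a b where p: "p = (a,b)" by (cases p)
  have e: "t (a, (b-1) + 1) * t (a + 1, b-1) - t (a, b-1) * t (a + 1, (b-1) + 1) = 1"
    using tile[OF assms(1)] by blast
  have "0 \<le> t (a, b-1) * t (a + 1, b)" using assms(2) by simp
  moreover have "0 \<le> t (a + 1, b-1)" using assms(2) by simp
  ultimately have "t (a,b) \<noteq> 0" using e by auto
  then show ?thesis using assms(2) p by (metis order_le_less)
qed

lemma col_rec: assumes "sl2_tiling t"
  shows "(t (a-1,b) + t (a+1,b)) * t (a,b+1) = (t (a-1,b+1) + t (a+1,b+1)) * t (a,b)"
proof -
  have e1: "t (a-1, b + 1) * t (a, b) - t (a-1, b) * t (a, b + 1) = 1"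
    using tile[OF assms, of "a-1" b] by simp
  have e2: "t (a, b + 1) * t (a + 1, b) - t (a, b) * t (a + 1, b + 1) = 1"
    using tile[OF assms, of a b] by simp
  show ?thesis using e1 e2 by (simp add: algebra_simps)
qed

lemma const_int: fixes f :: "int \<Rightarrow> 'a" assumes "\<And>i. f (i+1) = f i" shows "f i = f k"
proof (induction i rule: int_induct[where k=k])
  case base then show ?case by simp
next
  case (step1 i) then show ?case using assms by simp
next
  case (step2 i) then show ?case using assms[of "i-1"] by simp
qed

definition gam :: "(int \<times> int \<Rightarrow> int) \<Rightarrow> int \<Rightarrow> real" where
  "gam t a = real_of_int (t (a-1,0) + t (a+1,0)) / real_of_int (t (a,0))"

lemma col_const: assumes "sl2_tiling t" "\<forall>p. 0 \<le> t p"
  shows "real_of_int (t (a-1,b)) + real_of_int (t (a+1,b)) = gam t a * real_of_int (t (a,b))"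
proof -
  define f where "f b = real_of_int (t (a-1,b) + t (a+1,b)) / real_of_int (t (a,b))" for b
  have pos: "\<And>b. real_of_int (t (a,b)) > 0" using tiling_pos[OF assms] by simp
  have "f (b+1) = f b" for b
  proof -
    have "real_of_int ((t (a-1,b) + t (a+1,b)) * t (a,b+1)) = real_of_int ((t (a-1,b+1) + t (a+1,b+1)) * t (a,b))"
      using col_rec[OF assms(1)] by presburger
    then show ?thesis unfolding f_def using pos[of b] pos[of "b+1"]
      by (simp add: field_simps)
  qed
  then have "f b = f 0" using const_int[of f] by blast
  then show ?thesis unfolding f_def gam_def using pos[of b] pos[of 0] by (simp add: field_simps)
qed

lemma rep: assumes "sl2_tiling t" "\<forall>p. 0 \<le> t p"
  shows "real_of_int (t (a,b)) = dt (uu t y0 a) (vv t x0 y0 b)"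
proof -
  define F where "F i = real_of_int (t (i,b))" for i
  define g where "g i = dt (uu t y0 i) (vv t x0 y0 b)" for i
  have Frec: "F (i-1) + F (i+1) = gam t i * F i" for i
    unfolding F_def using col_const[OF assms] by simp
  have grec: "g (i-1) + g (i+1) = gam t i * g i" for i
  proof -
    have c0: "real_of_int (t (i-1,y0)) + real_of_int (t (i+1,y0)) = gam t i * real_of_int (t (i,y0))"
      using col_const[OF assms] by simp
    have c1: "real_of_int (t (i-1,y0-1)) + real_of_int (t (i+1,y0-1)) = gam t i * real_of_int (t (i,y0-1))"
      using col_const[OF assms] by simp
    define V where "V = vv t x0 y0 b"
    have "g (i-1) + g (i+1) = (real_of_int (t (i-1,y0)) + real_of_int (t (i+1,y0))) * snd V
        - (real_of_int (t (i-1,y0-1)) + real_of_int (t (i+1,y0-1))) * fst V"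
      unfolding g_def dt_def uu_def V_def by (simp add: algebra_simps)
    also have "\<dots> = gam t i * g i" unfolding c0 c1 g_def dt_def uu_def V_def by (simp add: algebra_simps)
    finally show ?thesis .
  qed
  have D: "real_of_int (t (x0,y0)) * real_of_int (t (x0+1,y0-1)) - real_of_int (t (x0,y0-1)) * real_of_int (t (x0+1,y0)) = 1"
  proof -
    have "t (x0, (y0-1) + 1) * t (x0 + 1, y0-1) - t (x0, y0-1) * t (x0 + 1, (y0-1) + 1) = 1"
      using tile[OF assms(1)] by blast
    then have "real_of_int (t (x0, y0) * t (x0 + 1, y0-1) - t (x0, y0-1) * t (x0 + 1, y0)) = 1" by simp
    then show ?thesis by simp
  qed
  have b0: "g x0 = F x0"
  proof -
    have "g x0 = F x0 * (real_of_int (t (x0,y0)) * real_of_int (t (x0+1,y0-1)) - real_of_int (t (x0,y0-1)) * real_of_int (t (x0+1,y0)))"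
      unfolding g_def F_def dt_def uu_def vv_def by (simp add: algebra_simps)
    then show ?thesis using D by simp
  qed
  have b1: "g (x0+1) = F (x0+1)"
  proof -
    have "g (x0+1) = F (x0+1) * (real_of_int (t (x0,y0)) * real_of_int (t (x0+1,y0-1)) - real_of_int (t (x0,y0-1)) * real_of_int (t (x0+1,y0)))"
      unfolding g_def F_def dt_def uu_def vv_def by (simp add: algebra_simps)
    then show ?thesis using D by simp
  qed
  have "F i = g i \<and> F (i+1) = g (i+1)" for i
  proof (induction i rule: int_induct[where k=x0])
    case base then show ?case using b0 b1 by simp
  next
    case (step1 i)
    have "F (i+2) = g (i+2)" using Frec[of "i+1"] grec[of "i+1"] step1(2)
      by (simp add: add.assoc)
    then show ?case using step1(2) by (simp add: add.assoc)
  next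
    case (step2 i)
    have "F (i-1) = g (i-1)" using Frec[of "i"] grec[of "i"] step2(2) by simp
    then show ?case using step2(2) by simp
  qed
  then show ?thesis unfolding F_def g_def by blast
qed

lemma uu_det: assumes "sl2_tiling t" shows "dt (uu t y0 a) (uu t y0 (a+1)) = 1"
proof -
  have "t (a, (y0-1) + 1) * t (a + 1, y0-1) - t (a, y0-1) * t (a + 1, (y0-1) + 1) = 1"
    using tile[OF assms(1)] by blast
  then have "real_of_int (t (a, y0) * t (a + 1, y0-1) - t (a, y0-1) * t (a + 1, y0)) = 1" by simp
  then show ?thesis unfolding dt_def uu_def by simp
qed

lemma lin_solve: fixes p q r s x y :: real
  assumes "p*s - q*r = 1" "p*y - q*x = 0" "x*s - y*r = 0" shows "x = 0 \<and> y = 0"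
proof -
  have "x = x*(p*s - q*r)" using assms(1) by simp
  also have "\<dots> = p*(x*s) - r*(q*x)" by (simp add: algebra_simps)
  also have "\<dots> = 0" using assms(2,3) by (simp add: algebra_simps)
  finally have x: "x = 0" .
  have "y = y*(p*s - q*r)" using assms(1) by simp
  also have "\<dots> = s*(p*y) - q*(y*r)" by (simp add: algebra_simps)
  also have "\<dots> = 0" using assms(2,3) by (simp add: algebra_simps)
  finally show ?thesis using x by simp
qed

lemma vec_solve: assumes "dt U V = 1" "dt U W = 0" "dt W V = 0" shows "W = 0"
  using lin_solve[of "fst U" "snd V" "snd U" "fst V" "snd W" "fst W"] assms
  unfolding dt_def by (simp add: prod_eq_iff algebra_simps)

lemma xstep: assumes "sl2_tiling t" "\<forall>p. 0 \<le> t p" "t (a,b) = 1" "t (a+1,b) = 1"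
  shows "uu t y0 (a+1) = uu t y0 a + vv t x0 y0 b"
proof -
  let ?U = "uu t y0 a" and ?U' = "uu t y0 (a+1)" and ?V = "vv t x0 y0 b"
  have 1: "dt ?U ?V = 1" using rep[OF assms(1,2), of a b] assms(3) by simp
  have 2: "dt ?U' ?V = 1" using rep[OF assms(1,2), of "a+1" b] assms(4) by simp
  have 3: "dt ?U ?U' = 1" using uu_det[OF assms(1)] by simp
  have "?U' - ?U - ?V = 0"
    apply (rule vec_solve[OF 1]) using 1 2 3 unfolding dt_def by (simp_all add: algebra_simps)
  then show ?thesis by (simp add: algebra_simps)
qed

lemma pluck: "dt U V' * dt U' V - dt U V * dt U' V' = dt U U' * dt V' V"
  unfolding dt_def by (simp add: algebra_simps)

lemma ystep: assumes "sl2_tiling t" "\<forall>p. 0 \<le> t p" "t (a,b) = 1" "t (a,b+1) = 1"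
  shows "vv t x0 y0 (b+1) = uu t y0 a + vv t x0 y0 b"
proof -
  let ?U = "uu t y0 a" and ?U' = "uu t y0 (a+1)" and ?V = "vv t x0 y0 b" and ?V' = "vv t x0 y0 (b+1)"
  have 1: "dt ?U ?V = 1" using rep[OF assms(1,2), of a b] assms(3) by simp
  have 2: "dt ?U ?V' = 1" using rep[OF assms(1,2), of a "b+1"] assms(4) by simp
  have 3: "dt ?U ?U' = 1" using uu_det[OF assms(1)] by simp
  have "real_of_int (t (a, b + 1) * t (a + 1, b) - t (a, b) * t (a + 1, b + 1)) = 1"
    using tile[OF assms(1)] by simp
  then have "dt ?U ?V' * dt ?U' ?V - dt ?U ?V * dt ?U' ?V' = 1"
    using rep[OF assms(1,2)] by simp
  then have 4: "dt ?V' ?V = 1" using pluck 3 by simp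
  have "?V' - ?U - ?V = 0"
    apply (rule vec_solve[OF 1]) using 1 2 4 unfolding dt_def by (simp_all add: algebra_simps)
  then show ?thesis by (simp add: algebra_simps)
qed

definition LL :: "nat \<Rightarrow> real \<times> real \<Rightarrow> real \<times> real \<Rightarrow> real \<times> real \<Rightarrow> real \<times> real" where
 "LL h u0 v0 w = (- dt w v0 * fst u0 + ((real h + 1) * dt w v0 - dt u0 w) * fst v0,
                  - dt w v0 * snd u0 + ((real h + 1) * dt w v0 - dt u0 w) * snd v0)"

lemma LL_add: "LL h u0 v0 (p + q) = LL h u0 v0 p + LL h u0 v0 q"
  unfolding LL_def dt_def by (simp add: algebra_simps)

lemma LL_minus: "LL h u0 v0 (- p) = - LL h u0 v0 p"
  unfolding LL_def dt_def by (simp add: algebra_simps)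

lemma LL_u0: "dt u0 v0 = 1 \<Longrightarrow> LL h u0 v0 u0 = ((real h + 1) * fst v0 - fst u0, (real h + 1) * snd v0 - snd u0)"
  unfolding LL_def by (simp add: dt_def algebra_simps)

lemma LL_v0: "dt u0 v0 = 1 \<Longrightarrow> LL h u0 v0 v0 = - v0"
  unfolding LL_def by (simp add: dt_def algebra_simps prod_eq_iff)

lemma dt_LL: assumes "dt u0 v0 = 1"
  shows "dt w (LL h u0 v0 w') = (real h + 1) * dt w v0 * dt w' v0 - dt w w'"
proof -
  have "dt w w' * dt u0 v0 = dt w v0 * dt u0 w' - dt u0 w * dt w' v0" by (simp add: dt_def algebra_simps)
  then have e: "dt w w' = dt w v0 * dt u0 w' - dt u0 w * dt w' v0" using assms by simp
  show ?thesis unfolding e unfolding LL_def by (simp add: dt_def algebra_simps)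
qed

lemma dt_swap: "dt w' w = - dt w w'" by (simp add: dt_def)
lemma dt_self: "dt w w = 0" by (simp add: dt_def)

theorem mainTheorem7:
  fixes h :: nat and s :: "nat \<Rightarrow> letter"
    and P :: "int \<Rightarrow> int \<times> int" and t :: "int \<times> int \<Rightarrow> int"
  assumes adm: "\<not> ult_const s"
    and path: "is_path (frontier h s) P"
    and nonneg: "\<forall>p. 0 \<le> t p"
    and tiling: "sl2_tiling t"
    and ones: "\<forall>i. t (P i) = 1"
  shows "let I = P (int h);
             i = (\<lambda>n::nat. t (fst I + int n, snd I));
             j = (\<lambda>n::nat. t (fst I + int n, snd I - 1 - int n));
             k' = (\<lambda>n::nat. t (fst I + int n + 1, snd I - 1 - int n));
             k = (\<lambda>n::nat. t (fst I + int n, snd I - 2 - int n))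
         in (\<forall>n. k' n - 1 = (int h + 1) * i n * i (n + 1))
          \<and> (\<forall>n. (j (n + 1) - j n)^2 + (k n + k' n)^2 = (j (n + 1) + j n)^2)"
proof -
  define x0 where "x0 = fst (P (int h))"
  define y0 where "y0 = snd (P (int h))"
  have Ph: "P (int h) = (x0, y0)" by (simp add: x0_def y0_def)
  have pathi: "P (i + 1) = (fst (P i) + fst (step (frontier h s (i + 1))), snd (P i) + snd (step (frontier h s (i + 1))))" for i
    using path unfolding is_path_def by (metis add_diff_cancel_right')
  have row: "P (int h - int m) = (x0 - int m, y0)" if "m \<le> h" for m
    using that
  proof (induction m)
    case 0 then show ?case using Ph by simp
  next
    case (Suc m)
    have f: "frontier h s (int h - int (Suc m) + 1) = X"
      using Suc.prems unfolding frontier_def by auto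
    have "P (int h - int m) = (fst (P (int h - int (Suc m))) + 1, snd (P (int h - int (Suc m))))"
      using pathi[of "int h - int (Suc m)"] f by simp
    then show ?case using Suc by (cases "P (int h - int (Suc m))") auto
  qed
  have P0: "P 0 = (x0 - int h, y0)" using row[of h] by simp
  have Pm1: "P (-1) = (x0 - int h, y0 - 1)"
  proof -
    have "frontier h s (-1 + 1) = Y" unfolding frontier_def by simp
    then have "P 0 = (fst (P (-1)), snd (P (-1)) + 1)" using pathi[of "-1"] by simp
    then show ?thesis using P0 by (simp add: prod_eq_iff)
  qed
  have Ph1: "P (int h + 1) = (x0, y0 + 1)"
  proof -
    have "frontier h s (int h + 1) = Y" unfolding frontier_def by simp
    then show ?thesis using pathi[of "int h"] Ph by simp
  qed
  define F where "F k = P (int h + 1 + int k)" for k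
  define B where "B k = P (-1 - int k)" for k
  have Fstep: "F (Suc k) = (fst (F k) + fst (step (s k)), snd (F k) + snd (step (s k)))" for k
  proof -
    have f: "frontier h s (int h + 1 + int k + 1) = s k" unfolding frontier_def by simp
    have "int h + 1 + int (Suc k) = int h + 1 + int k + 1" by simp
    then show ?thesis unfolding F_def using pathi[of "int h + 1 + int k"] f by simp
  qed
  have Bstep: "B k = (fst (B (Suc k)) + fst (step (swap_letter (s k))), snd (B (Suc k)) + snd (step (swap_letter (s k))))" for k
  proof -
    have f: "frontier h s (-1 - int (Suc k) + 1) = swap_letter (s k)" unfolding frontier_def by simp
    have "-1 - int k = -1 - int (Suc k) + 1" by simp
    then show ?thesis unfolding B_def using pathi[of "-1 - int (Suc k)"] f by simp
  qed
  have tF: "t (F k) = 1" and tB: "t (B k) = 1" for k using ones by (simp_all add: F_def B_def)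
  define u where "u = uu t y0"
  define v where "v = vv t x0 y0"
  define L where "L = LL h (u x0) (v y0)"
  have repu: "real_of_int (t (a,b)) = dt (u a) (v b)" for a b
    unfolding u_def v_def using rep[OF tiling nonneg] by simp
  have d0: "dt (u x0) (v y0) = 1" using repu[of x0 y0] ones Ph by (metis of_int_1)
  have xs: "t (a,b) = 1 \<Longrightarrow> t (a+1,b) = 1 \<Longrightarrow> u (a+1) = u a + v b" for a b
    unfolding u_def v_def using xstep[OF tiling nonneg] by simp
  have ys: "t (a,b) = 1 \<Longrightarrow> t (a,b+1) = 1 \<Longrightarrow> v (b+1) = u a + v b" for a b
    unfolding u_def v_def using ystep[OF tiling nonneg] by simp
  have urow: "u (x0 - int m) = (fst (u x0) - real m * fst (v y0), snd (u x0) - real m * snd (v y0))" if "m \<le> h" for m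
    using that
  proof (induction m)
    case 0 then show ?case by simp
  next
    case (Suc m)
    have "u (x0 - int (Suc m) + 1) = u (x0 - int (Suc m)) + v y0"
    proof (rule xs)
      show "t (x0 - int (Suc m), y0) = 1" using ones row[of "Suc m"] Suc.prems by metis
      have "x0 - int (Suc m) + 1 = x0 - int m" by simp
      then show "t (x0 - int (Suc m) + 1, y0) = 1" using ones row[of m] Suc.prems by (metis Suc_leD)
    qed
    then have "u (x0 - int m) = u (x0 - int (Suc m)) + v y0" by simp
    then show ?case using Suc by (auto simp: prod_eq_iff algebra_simps)
  qed
  have vup: "v (y0 + 1) = u x0 + v y0" using ys[of x0 y0] ones Ph Ph1 by metis
  have vdown: "v y0 = u (x0 - int h) + v (y0 - 1)"
    using ys[of "x0 - int h" "y0 - 1"] ones Pm1 P0 by (metis diff_add_cancel)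
  have uh: "u (x0 - int h) = (fst (u x0) - real h * fst (v y0), snd (u x0) - real h * snd (v y0))"
    using urow[of h] by simp
  have F0: "F 0 = (x0, y0 + 1)" using Ph1 by (simp add: F_def)
  have B0: "B 0 = (x0 - int h, y0 - 1)" using Pm1 by (simp add: B_def)
  have base1: "v (y0 - 1) = L (u x0)"
  proof -
    have "v (y0 - 1) = v y0 - u (x0 - int h)" using vdown by (simp add: algebra_simps)
    then show ?thesis unfolding L_def using LL_u0[OF d0, of h] uh by (simp add: prod_eq_iff algebra_simps)
  qed
  have base2: "u (x0 - int h) = - L (v (y0 + 1))"
    unfolding vup L_def LL_add LL_u0[OF d0] LL_v0[OF d0] uh by (simp add: prod_eq_iff algebra_simps)
  have inv: "fst (B k) = x0 + 1 - int h - (snd (F k) - y0) \<and> snd (B k) = y0 - 1 - (fst (F k) - x0)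
     \<and> v (snd (B k)) = L (u (fst (F k))) \<and> u (fst (B k)) = - L (v (snd (F k)))" for k
  proof (induction k)
    case 0 then show ?case using F0 B0 base1 base2 by simp
  next
    case (Suc k)
    obtain a b where Fk: "F k = (a,b)" by (cases "F k")
    obtain a' b' where Bk: "B (Suc k) = (a',b')" by (cases "B (Suc k)")
    show ?case
    proof (cases "s k")
      case X
      have F1: "F (Suc k) = (a+1, b)" using Fstep[of k] X Fk by simp
      have B1: "B k = (a', b'+1)" using Bstep[of k] X Bk by simp
      have e1: "u (a+1) = u a + v b" using xs[of a b] tF[of k] tF[of "Suc k"] Fk F1 by simp
      have e2: "v (b'+1) = u a' + v b'" using ys[of a' b'] tB[of k] tB[of "Suc k"] Bk B1 by simp
      have ih: "a' = x0 + 1 - int h - (b - y0)" "b' + 1 = y0 - 1 - (a - x0)"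
        "v (b'+1) = L (u a)" "u a' = - L (v b)" using Suc.IH Fk B1 by auto
      have "v b' = v (b'+1) - u a'" using e2 by (simp add: algebra_simps)
      also have "\<dots> = L (u a + v b)" using ih(3,4) unfolding L_def LL_add by simp
      finally have "v b' = L (u (a+1))" using e1 by simp
      then show ?thesis using F1 Bk ih by simp
    next
      case Y
      have F1: "F (Suc k) = (a, b+1)" using Fstep[of k] Y Fk by simp
      have B1: "B k = (a'+1, b')" using Bstep[of k] Y Bk by simp
      have e1: "v (b+1) = u a + v b" using ys[of a b] tF[of k] tF[of "Suc k"] Fk F1 by simp
      have e2: "u (a'+1) = u a' + v b'" using xs[of a' b'] tB[of k] tB[of "Suc k"] Bk B1 by simp
      have ih: "a' + 1 = x0 + 1 - int h - (b - y0)" "b' = y0 - 1 - (a - x0)"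
        "v b' = L (u a)" "u (a'+1) = - L (v b)" using Suc.IH Fk B1 by auto
      have "u a' = u (a'+1) - v b'" using e2 by (simp add: algebra_simps)
      also have "\<dots> = - L (u a + v b)" using ih(3,4) unfolding L_def LL_add by (simp add: algebra_simps)
      finally have "u a' = - L (v (b+1))" using e1 by simp
      then show ?thesis using F1 Bk ih by simp
    qed
  qed
  have Fx: "fst (F (Suc k)) = fst (F k) + (if s k = X then 1 else 0)" for k
    using Fstep[of k] by (cases "s k") auto
  have infX: "\<exists>m\<ge>N. s m = X" for N
  proof (rule ccontr)
    assume "\<not> ?thesis"
    then have "\<forall>m\<ge>N. s m = Y" by (metis letter.exhaust)
    then show False using adm unfolding ult_const_def by blast
  qed
  have adv: "(\<exists>i<d. s (k+i) = X) \<longrightarrow> (\<exists>j. fst (F j) = fst (F k) + 1)" for d k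
  proof (induction d arbitrary: k)
    case 0 then show ?case by simp
  next
    case (Suc d)
    show ?case
    proof
      assume a: "\<exists>i<Suc d. s (k+i) = X"
      show "\<exists>j. fst (F j) = fst (F k) + 1"
      proof (cases "s k = X")
        case True then show ?thesis using Fx[of k] by auto
      next
        case False
        then obtain i where i: "i < Suc d" "s (k+i) = X" "i \<noteq> 0" using a by (metis add_0_right)
        then have "\<exists>i<d. s (Suc k + i) = X" by (intro exI[of _ "i - 1"]) auto
        then show ?thesis using Suc.IH[of "Suc k"] Fx[of k] False by auto
      qed
    qed
  qed
  have hit: "\<exists>k. fst (F k) = x0 + int n" for n
  proof (induction n)
    case 0 then show ?case using F0 by (intro exI[of _ 0]) simp
  next
    case (Suc n)
    then obtain k where k: "fst (F k) = x0 + int n" by blast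
    obtain m where m: "m \<ge> k" "s m = X" using infX by blast
    have "\<exists>i<Suc (m - k). s (k+i) = X" using m by (intro exI[of _ "m - k"]) auto
    then obtain j where "fst (F j) = fst (F k) + 1" using adv by blast
    then show ?case using k by (intro exI[of _ j]) simp
  qed
  have key: "v (y0 - 1 - int n) = L (u (x0 + int n))" for n
  proof -
    obtain k where k: "fst (F k) = x0 + int n" using hit by blast
    then show ?thesis using inv[of k] by auto
  qed
  define w where "w n = u (x0 + int n)" for n
  define al where "al n = dt (w n) (v y0)" for n
  have al: "al n = real_of_int (t (x0 + int n, y0))" for n unfolding al_def w_def using repu by simp
  have ww: "dt (w n) (w (n+1)) = 1" for n
  proof -
    have "dt (u (x0 + int n)) (u (x0 + int n + 1)) = 1" unfolding u_def using uu_det[OF tiling] by blast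
    moreover have "x0 + int (n+1) = x0 + int n + 1" by simp
    ultimately show ?thesis unfolding w_def by metis
  qed
  have jr: "real_of_int (t (x0 + int n, y0 - 1 - int n)) = (real h + 1) * al n ^ 2" for n
    using repu key[of n] dt_LL[OF d0] unfolding L_def w_def al_def by (simp add: dt_self power2_eq_square)
  have kr': "real_of_int (t (x0 + int n + 1, y0 - 1 - int n)) = (real h + 1) * al n * al (n+1) + 1" for n
  proof -
    have e: "x0 + int n + 1 = x0 + int (n+1)" by simp
    have "real_of_int (t (x0 + int n + 1, y0 - 1 - int n)) = dt (w (n+1)) (L (w n))"
      unfolding w_def e by (simp only: repu key)
    also have "\<dots> = (real h + 1) * al n * al (n+1) + 1"
      unfolding L_def dt_LL[OF d0] using ww[of n] dt_swap[of "w (n+1)" "w n"] unfolding al_def by simp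
    finally show ?thesis .
  qed
  have kr: "real_of_int (t (x0 + int n, y0 - 2 - int n)) = (real h + 1) * al n * al (n+1) - 1" for n
  proof -
    have e: "y0 - 2 - int n = y0 - 1 - int (n+1)" by simp
    have "real_of_int (t (x0 + int n, y0 - 2 - int n)) = dt (w n) (L (w (n+1)))"
      unfolding w_def e by (simp only: repu key)
    also have "\<dots> = (real h + 1) * al n * al (n+1) - 1"
      unfolding L_def dt_LL[OF d0] using ww[of n] unfolding al_def by simp
    finally show ?thesis .
  qed
  have part1: "t (x0 + int n + 1, y0 - 1 - int n) - 1 = (int h + 1) * t (x0 + int n, y0) * t (x0 + int (n+1), y0)" for n
  proof -
    have "real_of_int (t (x0 + int n + 1, y0 - 1 - int n) - 1) = real_of_int ((int h + 1) * t (x0 + int n, y0) * t (x0 + int (n+1), y0))"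
      using kr'[of n] al[of n] al[of "n+1"] by simp
    then show ?thesis by (simp only: of_int_eq_iff)
  qed
  have part2: "(t (x0 + int (n+1), y0 - 1 - int (n+1)) - t (x0 + int n, y0 - 1 - int n))^2
      + (t (x0 + int n, y0 - 2 - int n) + t (x0 + int n + 1, y0 - 1 - int n))^2
      = (t (x0 + int (n+1), y0 - 1 - int (n+1)) + t (x0 + int n, y0 - 1 - int n))^2" for n
  proof -
    have "real_of_int ((t (x0 + int (n+1), y0 - 1 - int (n+1)) - t (x0 + int n, y0 - 1 - int n))^2
      + (t (x0 + int n, y0 - 2 - int n) + t (x0 + int n + 1, y0 - 1 - int n))^2)
      = real_of_int ((t (x0 + int (n+1), y0 - 1 - int (n+1)) + t (x0 + int n, y0 - 1 - int n))^2)"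
      unfolding of_int_add of_int_diff of_int_power jr kr kr' by (simp add: power2_eq_square algebra_simps)
    then show ?thesis by (simp only: of_int_eq_iff)
  qed
  show ?thesis unfolding Let_def Ph fst_conv snd_conv using part1 part2 by blast
qed

end
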